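(* The transformation $T$ defined as follows is multiply recurrent: $T$ is the rank-one cutting and stacking transformation with $C_0=I=(0,1)$, $r_n=n+2$, $h_n=5^{n(n+1)/2}$ for all $n\ge0$, and spacers chosen so that for each $n$ $$H_n=\{0\}\cup\{j\cdot5^{n(n+1)/2}:1\le j\le\lceil\sqrt n\rceil\}\cup\{5^{n(n+1)/2+i}:\lceil\sqrt n\rceil\le i\le n\}.$$ That is, for every $k\in\mathbb N$ and every measurable $A$ with $\mu(A)>0$ there is $n\in\mathbb N$ with $\mu(A\cap T^nA\cap T^{2n}A\cap\cdots\cap T^{kn}A)>0$.
   Context: Cutting and stacking: $C_0$ is a single level $I$; column $C_n$ of height $h_n$ is cut into $r_n$ equal-width subcolumns, $s_{n,k}\ge0$ spacers are placed above the $k$-th subcolumn, and subcolumns are stacked left to right to form $C_{n+1}$; $T$ maps each level to the one above. With $h_{n,k}=h_n+s_{n,k}$, $H_n=\{0\}\cup\{\sum_{k=0}^{i}h_{n,k}:0\le i<r_n-1\}$; the prescriptions determine $s_{n,k}$ for $k<r_n-1$, and $s_{n,r_n-1}$ is determined by $h_{n+1}=5^{(n+1)(n+2)/2}$. (Thus the first $\lceil\sqrt n\rceil-1$ subcolumns of $C_n$ carry no spacers.) $\mu$ is Lebesgue measure on the resulting space. *)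

theory Defs
  imports "HOL-Analysis.Analysis"
begin

text \<open>Parameters: r n = number of subcolumns of C_n, s n k = number of spacers
placed above the k-th subcolumn of C_n (k < r n).
C_0 is the single level [0,1).  Levels of C_n are intervals of width cs_width r n,
level j of C_n (j < cs_h r s n) being [cs_left r s n j, cs_left r s n j + cs_width r n).
Spacers added at stage n are fresh intervals taken consecutively from [cs_base r s n, ...).\<close>

fun cs_h :: "(nat \<Rightarrow> nat) \<Rightarrow> (nat \<Rightarrow> nat \<Rightarrow> nat) \<Rightarrow> nat \<Rightarrow> nat" where
  "cs_h r s 0 = 1"
| "cs_h r s (Suc n) = (\<Sum>k<r n. cs_h r s n + s n k)"

definition cs_width :: "(nat \<Rightarrow> nat) \<Rightarrow> nat \<Rightarrow> real" where
  "cs_width r n = 1 / real (\<Prod>i<n. r i)"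

text \<open>height in C_(n+1) at which the k-th subcolumn of C_n starts\<close>
definition cs_off :: "(nat \<Rightarrow> nat) \<Rightarrow> (nat \<Rightarrow> nat \<Rightarrow> nat) \<Rightarrow> nat \<Rightarrow> nat \<Rightarrow> nat" where
  "cs_off r s n k = (\<Sum>i<k. cs_h r s n + s n i)"

fun cs_base :: "(nat \<Rightarrow> nat) \<Rightarrow> (nat \<Rightarrow> nat \<Rightarrow> nat) \<Rightarrow> nat \<Rightarrow> real" where
  "cs_base r s 0 = 1"
| "cs_base r s (Suc n) = cs_base r s n + real (\<Sum>k<r n. s n k) * cs_width r (Suc n)"

fun cs_left :: "(nat \<Rightarrow> nat) \<Rightarrow> (nat \<Rightarrow> nat \<Rightarrow> nat) \<Rightarrow> nat \<Rightarrow> nat \<Rightarrow> real" where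
  "cs_left r s 0 p = 0"
| "cs_left r s (Suc n) p =
     (let k = (GREATEST k. k < r n \<and> cs_off r s n k \<le> p);
          q = p - cs_off r s n k
      in if q < cs_h r s n
         then cs_left r s n q + real k * cs_width r (Suc n)
         else cs_base r s n + real ((\<Sum>i<k. s n i) + (q - cs_h r s n)) * cs_width r (Suc n))"

definition cs_level :: "(nat \<Rightarrow> nat) \<Rightarrow> (nat \<Rightarrow> nat \<Rightarrow> nat) \<Rightarrow> nat \<Rightarrow> nat \<Rightarrow> real set" where
  "cs_level r s n j = {cs_left r s n j ..< cs_left r s n j + cs_width r n}"

definition cs_space :: "(nat \<Rightarrow> nat) \<Rightarrow> (nat \<Rightarrow> nat \<Rightarrow> nat) \<Rightarrow> real set" where
  "cs_space r s = (\<Union>n. \<Union>j<cs_h r s n. cs_level r s n j)"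

text \<open>T maps each level (other than the top one) to the level above by translation;
it is left as the identity on the null set where it is undefined and outside X.\<close>
definition cs_map :: "(nat \<Rightarrow> nat) \<Rightarrow> (nat \<Rightarrow> nat \<Rightarrow> nat) \<Rightarrow> real \<Rightarrow> real" where
  "cs_map r s x =
    (if \<exists>n j. Suc j < cs_h r s n \<and> x \<in> cs_level r s n j
     then (SOME y. \<exists>n j. Suc j < cs_h r s n \<and> x \<in> cs_level r s n j \<and>
                         y = x - cs_left r s n j + cs_left r s n (Suc j))
     else x)"

definition hgt :: "nat \<Rightarrow> nat" where
  "hgt n = 5 ^ (n * (n + 1) div 2)"

definition rr :: "nat \<Rightarrow> nat" where
  "rr n = n + 2"

definition Hset :: "nat \<Rightarrow> nat set" where
  "Hset n = {0}
     \<union> {j * 5 ^ (n * (n + 1) div 2) | j. 1 \<le> j \<and> j \<le> nat \<lceil>sqrt (real n)\<rceil>}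
     \<union> {5 ^ (n * (n + 1) div 2 + i) | i. nat \<lceil>sqrt (real n)\<rceil> \<le> i \<and> i \<le> n}"

text \<open>H_n lists (in increasing order) the heights at which the subcolumns start\<close>
definition Hoff :: "nat \<Rightarrow> nat \<Rightarrow> nat" where
  "Hoff n k = sorted_list_of_set (Hset n) ! k"

text \<open>spacers: determined by H_n for k < r_n - 1, and by h_(n+1) for the last subcolumn\<close>
definition spacer :: "nat \<Rightarrow> nat \<Rightarrow> nat" where
  "spacer n k = (if Suc k < rr n then Hoff n (Suc k) - Hoff n k - hgt n
                 else hgt (Suc n) - Hoff n k - hgt n)"

end

theory Submission
  imports Defs
begin


definition cc :: "nat \<Rightarrow> nat" where "cc n = nat \<lceil>sqrt (real n)\<rceil>"

lemma cc_le: "cc n \<le> n"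
proof (cases "n = 0")
  case True then show ?thesis by (simp add: cc_def)
next
  case False
  then have "real n \<le> real n * real n" by simp
  then have "sqrt (real n) \<le> sqrt (real n * real n)" using real_sqrt_le_mono by blast
  also have "\<dots> = real n" by simp
  finally have "sqrt (real n) \<le> real n" .
  then show ?thesis by (simp add: cc_def)
qed

lemma cc_ge: assumes "k * k \<le> n" shows "k \<le> cc n"
proof -
  have "real (k*k) \<le> real n" using assms by linarith
  then have "real k \<le> sqrt (real n)" using real_sqrt_le_mono[of "real k * real k" "real n"] by simp
  then have "int k \<le> \<lceil>sqrt (real n)\<rceil>" by (smt (verit) le_ceiling_iff of_int_of_nat_eq)
  then show ?thesis by (simp add: cc_def)
qed

lemma cc_pos: "0 < n \<Longrightarrow> Suc 0 \<le> nat \<lceil>sqrt (real n)\<rceil>"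
proof -
  assume "0 < n" then have "0 < sqrt (real n)" by simp
  then have "0 < \<lceil>sqrt (real n)\<rceil>" by linarith
  then show ?thesis by linarith
qed

definition HL :: "nat \<Rightarrow> nat list" where
  "HL n = map (\<lambda>j. j * 5 ^ (n * (n + 1) div 2)) [0..<Suc (cc n)]
        @ map (\<lambda>i. 5 ^ (n * (n + 1) div 2 + i)) [cc n..<Suc n]"

lemma set_HL: "set (HL n) = Hset n"
proof -
  have a: "set (map (\<lambda>j. j * 5 ^ (n * (n + 1) div 2)) [0..<Suc (cc n)])
     = {0} \<union> {j * 5 ^ (n * (n + 1) div 2) | j. 1 \<le> j \<and> j \<le> nat \<lceil>sqrt (real n)\<rceil>}"
    using cc_pos by (auto simp: cc_def)
  have b: "set (map (\<lambda>i. 5 ^ (n * (n + 1) div 2 + i)) [cc n..<Suc n])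
     = {5 ^ (n * (n + 1) div 2 + i) | i. nat \<lceil>sqrt (real n)\<rceil> \<le> i \<and> i \<le> n}"
    by (auto simp: cc_def)
  show ?thesis unfolding HL_def Hset_def set_append a b by blast
qed

lemma c_lt_pow: "c < (5::nat) ^ c"
  by (induction c) auto

lemma sorted_HL: "sorted_wrt (<) (HL n)"
proof -
  let ?m = "n * (n + 1) div 2"
  have p: "(0::nat) < 5 ^ ?m" by simp
  have 1: "sorted_wrt (<) (map (\<lambda>j. j * 5 ^ ?m) [0..<Suc (cc n)])"
    unfolding sorted_wrt_map by (rule sorted_wrt_mono_rel[OF _ sorted_wrt_upt]) simp
  have 2: "sorted_wrt (<) (map (\<lambda>i. (5::nat) ^ (?m + i)) [cc n..<Suc n])"
    unfolding sorted_wrt_map by (rule sorted_wrt_mono_rel[OF _ sorted_wrt_upt]) (simp add: power_add)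
  have 3: "x < y" if xin: "x \<in> set (map (\<lambda>j. j * 5 ^ ?m) [0..<Suc (cc n)])"
     and yin: "y \<in> set (map (\<lambda>i. 5 ^ (?m + i)) [cc n..<Suc n])" for x y
  proof -
    obtain j where j: "j \<le> cc n" "x = j * 5 ^ ?m" using xin by (auto simp: less_Suc_eq_le)
    obtain i where i: "cc n \<le> i" "y = 5 ^ (?m + i)" using yin by auto
    have "(5::nat) ^ cc n \<le> 5 ^ i" using i(1) by (rule power_increasing) simp
    then have "j < 5 ^ i" using c_lt_pow[of "cc n"] j(1) by linarith
    then have "j * 5 ^ ?m < 5 ^ i * 5 ^ ?m" using p by simp
    then show ?thesis using i j by (simp add: power_add mult.commute)
  qed
  show ?thesis unfolding HL_def sorted_wrt_append using 1 2 3 by blast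
qed

lemma sorted_list_Hset: "sorted_list_of_set (Hset n) = HL n"
  using sorted_HL[of n] set_HL[of n]
  by (metis sorted_list_of_set.idem_if_sorted_distinct strict_sorted_iff)

lemma Hoff_small: assumes "j \<le> cc n" shows "Hoff n j = j * hgt n"
  using assms unfolding Hoff_def sorted_list_Hset HL_def hgt_def
  by (simp add: nth_append del: upt_Suc)

lemma spacer_zero: assumes "i < cc n" shows "spacer n i = 0"
proof -
  have "Suc i < rr n" using assms cc_le[of n] by (simp add: rr_def)
  then show ?thesis using assms Hoff_small[of "Suc i" n] Hoff_small[of i n]
    by (simp add: spacer_def algebra_simps)
qed



abbreviation "H n \<equiv> cs_h rr spacer n"
abbreviation "W n \<equiv> cs_width rr n"
abbreviation "Off n i \<equiv> cs_off rr spacer n i"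
abbreviation "LF n j \<equiv> cs_left rr spacer n j"
abbreviation "LV n j \<equiv> cs_level rr spacer n j"
abbreviation "TT \<equiv> cs_map rr spacer"

lemma rr_pos: "0 < rr n" by (simp add: rr_def)

lemma H_pos: "0 < H n"
proof (induction n)
  case 0 then show ?case by simp
next
  case (Suc n)
  have "H n + spacer n 0 \<le> (\<Sum>k<rr n. H n + spacer n k)"
    using rr_pos[of n] by (intro member_le_sum) auto
  then show ?case using Suc by simp
qed

lemma Off_Suc: "Off n (Suc i) = Off n i + H n + spacer n i"
  by (simp add: cs_off_def)

lemma Off_0: "Off n 0 = 0" by (simp add: cs_off_def)

lemma Off_mono: "i < j \<Longrightarrow> Off n i + H n \<le> Off n j"
proof (induction j)
  case 0 then show ?case by simp
next
  case (Suc j)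
  then show ?case by (cases "i = j") (auto simp: Off_Suc)
qed

lemma Off_r: "Off n (rr n) = H (Suc n)"
  by (simp add: cs_off_def)

lemma Off_small: "i \<le> cc n \<Longrightarrow> Off n i = i * H n"
proof (induction i)
  case 0 then show ?case by (simp add: Off_0)
next
  case (Suc i)
  then show ?case by (simp add: Off_Suc spacer_zero)
qed

lemma W_Suc: "W n = real (rr n) * W (Suc n)"
proof -
  have p: "0 < (\<Prod>i<n. real (rr i))" by (simp add: prod_pos rr_def)
  show ?thesis unfolding cs_width_def using p rr_pos[of n] by (simp add: field_simps)
qed

lemma W_pos: "0 < W n"
  unfolding cs_width_def rr_def by (simp add: prod_pos)

lemma W_0: "W 0 = 1" by (simp add: cs_width_def)

definition gk :: "nat \<Rightarrow> nat \<Rightarrow> nat" where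
  "gk n p = (GREATEST k. k < rr n \<and> Off n k \<le> p)"

lemma gk_props:
  assumes "p < H (Suc n)"
  shows "gk n p < rr n" "Off n (gk n p) \<le> p" "p < Off n (gk n p) + H n + spacer n (gk n p)"
proof -
  let ?P = "\<lambda>k. k < rr n \<and> Off n k \<le> p"
  have P0: "?P 0" using rr_pos[of n] by (simp add: Off_0)
  have b: "\<And>y. ?P y \<Longrightarrow> y \<le> rr n" by auto
  have g: "?P (gk n p)" unfolding gk_def using GreatestI_nat[of ?P 0 "rr n", OF P0 b] .
  then show "gk n p < rr n" "Off n (gk n p) \<le> p" by auto
  show "p < Off n (gk n p) + H n + spacer n (gk n p)"
  proof (rule ccontr)
    assume "\<not> ?thesis"
    then have le: "Off n (Suc (gk n p)) \<le> p" by (simp add: Off_Suc)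
    show False
    proof (cases "Suc (gk n p) < rr n")
      case True
      then have "Suc (gk n p) \<le> gk n p" unfolding gk_def
        using Greatest_le_nat[of ?P "Suc (gk n p)" "rr n"] le b unfolding gk_def by auto
      then show False by simp
    next
      case False
      then have "Suc (gk n p) = rr n" using g by simp
      then show False using le assms Off_r[of n] by simp
    qed
  qed
qed

lemma gk_eq:
  assumes "i < rr n" "q < H n + spacer n i"
  shows "gk n (Off n i + q) = i"
  unfolding gk_def
proof (rule Greatest_equality)
  show "i < rr n \<and> Off n i \<le> Off n i + q" using assms by simp
  fix y assume y: "y < rr n \<and> Off n y \<le> Off n i + q"
  show "y \<le> i"
  proof (rule ccontr)
    assume "\<not> y \<le> i"
    then have "Suc i \<le> y" by simp
    then have "Off n (Suc i) \<le> Off n y"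
      using Off_mono[of "Suc i" y n] by (cases "Suc i = y") auto
    then show False using y assms by (simp add: Off_Suc)
  qed
qed

fun bx :: "nat \<Rightarrow> nat" where
  "bx 0 = 1"
| "bx (Suc n) = bx n * rr n + (\<Sum>k<rr n. spacer n k)"

fun ix :: "nat \<Rightarrow> nat \<Rightarrow> nat" where
  "ix 0 p = 0"
| "ix (Suc n) p = (let k = gk n p; q = p - Off n k in
     if q < H n then ix n q * rr n + k
     else bx n * rr n + ((\<Sum>i<k. spacer n i) + (q - H n)))"

lemma base_eq: "cs_base rr spacer n = real (bx n) * W n"
proof (induction n)
  case 0 then show ?case by (simp add: W_0)
next
  case (Suc n)
  show ?case using Suc W_Suc[of n] by (simp add: algebra_simps)
qed

lemma LF_eq: "LF n p = real (ix n p) * W n"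
proof (induction n arbitrary: p)
  case 0 then show ?case by simp
next
  case (Suc n)
  show ?case
    unfolding cs_left.simps(2) ix.simps(2) gk_def[symmetric] Let_def
    using Suc W_Suc[of n] base_eq[of n] by (simp add: algebra_simps)
qed



declare ix.simps(2)[simp del]

lemma ix_piece:
  assumes "i < rr n" "q < H n"
  shows "ix (Suc n) (Off n i + q) = ix n q * rr n + i"
  using gk_eq[of i n q] assms by (simp add: Let_def ix.simps(2))

lemma piece_lt: assumes "i < rr n" "q < H n" shows "Off n i + q < H (Suc n)"
  using Off_mono[of i "rr n" n] assms Off_r[of n] by simp

lemma sum_spacer_le: "k < rr n \<Longrightarrow> (\<Sum>i<Suc k. spacer n i) \<le> (\<Sum>i<rr n. spacer n i)"
  by (rule sum_mono2) auto

lemma divmod_uniq: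
  fixes a b i j r :: nat
  assumes "a * r + i = b * r + j" "i < r" "j < r"
  shows "i = j \<and> a = b"
proof -
  have "i = (a * r + i) mod r" using assms(2) by simp
  also have "\<dots> = (b * r + j) mod r" by (simp only: assms(1))
  also have "\<dots> = j" using assms(3) by simp
  finally have ij: "i = j" .
  then have "a * r = b * r" using assms(1) by simp
  then show ?thesis using ij assms(2) by simp
qed

lemma ix_inv: "(\<forall>j<H n. ix n j < bx n) \<and> inj_on (ix n) {..<H n}"
proof (induction n)
  case 0 then show ?case by (simp add: inj_on_def)
next
  case (Suc n)
  hence IH1: "\<And>j. j < H n \<Longrightarrow> ix n j < bx n" and IH2: "inj_on (ix n) {..<H n}" by auto
  let ?r = "rr n"
  have copy: "ix (Suc n) p = ix n (p - Off n (gk n p)) * ?r + gk n p"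
    "ix (Suc n) p < bx n * ?r"
    if "p < H (Suc n)" "p - Off n (gk n p) < H n" for p
  proof -
    show e: "ix (Suc n) p = ix n (p - Off n (gk n p)) * ?r + gk n p" using that by (simp add: Let_def ix.simps(2))
    have "ix n (p - Off n (gk n p)) < bx n" using IH1 that by simp
    then have "ix n (p - Off n (gk n p)) * ?r + ?r \<le> bx n * ?r"
      by (metis Suc_leI add.commute mult.commute mult_Suc_right mult_le_mono2)
    then show "ix (Suc n) p < bx n * ?r" using e gk_props(1)[OF that(1)] by linarith
  qed
  have spc: "ix (Suc n) p = bx n * ?r + ((\<Sum>i<gk n p. spacer n i) + (p - Off n (gk n p) - H n))"
    "bx n * ?r + (\<Sum>i<gk n p. spacer n i) \<le> ix (Suc n) p"
    "ix (Suc n) p < bx n * ?r + (\<Sum>i<Suc (gk n p). spacer n i)"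
    if "p < H (Suc n)" "\<not> p - Off n (gk n p) < H n" for p
  proof -
    show e: "ix (Suc n) p = bx n * ?r + ((\<Sum>i<gk n p. spacer n i) + (p - Off n (gk n p) - H n))"
      using that by (simp add: Let_def ix.simps(2))
    then show "bx n * ?r + (\<Sum>i<gk n p. spacer n i) \<le> ix (Suc n) p" by simp
    have "p - Off n (gk n p) - H n < spacer n (gk n p)" using gk_props[OF that(1)] that(2) by linarith
    then show "ix (Suc n) p < bx n * ?r + (\<Sum>i<Suc (gk n p). spacer n i)" using e by simp
  qed
  have bnd: "ix (Suc n) p < bx (Suc n)" if "p < H (Suc n)" for p
  proof (cases "p - Off n (gk n p) < H n")
    case True then show ?thesis using copy(2)[OF that] by simp
  next
    case False
    then show ?thesis using spc(3)[OF that False] sum_spacer_le[OF gk_props(1)[OF that]] by simp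
  qed
  have inj: "inj_on (ix (Suc n)) {..<H (Suc n)}"
  proof (rule inj_onI)
    fix p1 p2 assume p1: "p1 \<in> {..<H (Suc n)}" and p2: "p2 \<in> {..<H (Suc n)}"
      and eq: "ix (Suc n) p1 = ix (Suc n) p2"
    let ?k1 = "gk n p1" and ?k2 = "gk n p2"
    let ?q1 = "p1 - Off n ?k1" and ?q2 = "p2 - Off n ?k2"
    have p1r: "p1 = Off n ?k1 + ?q1" using gk_props(2)[of p1] p1 by simp
    have p2r: "p2 = Off n ?k2 + ?q2" using gk_props(2)[of p2] p2 by simp
    have k1: "?k1 < ?r" and k2: "?k2 < ?r" using gk_props(1) p1 p2 by auto
    show "p1 = p2"
    proof (cases "?q1 < H n")
      case c1: True
      show ?thesis
      proof (cases "?q2 < H n")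
        case c2: True
        have "ix n ?q1 * ?r + ?k1 = ix n ?q2 * ?r + ?k2" using eq copy(1)[of p1] copy(1)[of p2] p1 p2 c1 c2 by simp
        then have "?k1 = ?k2 \<and> ix n ?q1 = ix n ?q2"
          using divmod_uniq[OF _ k1 k2] by blast
        then have "?k1 = ?k2" "?q1 = ?q2" using IH2 c1 c2 by (auto dest: inj_onD)
        then show ?thesis using p1r p2r by simp
      next
        case c2: False
        have "ix (Suc n) p1 < bx n * ?r" using copy(2)[of p1] p1 c1 by simp
        moreover have "bx n * ?r \<le> ix (Suc n) p2" using spc(2)[of p2] p2 c2 by simp
        ultimately show ?thesis using eq by simp
      qed
    next
      case c1: False
      show ?thesis
      proof (cases "?q2 < H n")
        case c2: True
        have "ix (Suc n) p2 < bx n * ?r" using copy(2)[of p2] p2 c2 by simp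
        moreover have "bx n * ?r \<le> ix (Suc n) p1" using spc(2)[of p1] p1 c1 by simp
        ultimately show ?thesis using eq by simp
      next
        case c2: False
        have lt: False if "a < b" "ix (Suc n) pa = ix (Suc n) pb" "pa < H (Suc n)" "pb < H (Suc n)"
           "\<not> pa - Off n (gk n pa) < H n" "\<not> pb - Off n (gk n pb) < H n"
           "a = gk n pa" "b = gk n pb" for a b pa pb
        proof -
          have "(\<Sum>i<Suc a. spacer n i) \<le> (\<Sum>i<b. spacer n i)" using that(1) by (intro sum_mono2) auto
          then show False using spc(3)[of pa] spc(2)[of pb] that by simp
        qed
        have "?k1 = ?k2"
        proof (rule ccontr)
          assume "?k1 \<noteq> ?k2"
          then consider "?k1 < ?k2" | "?k2 < ?k1" by linarith
          then show False
          proof cases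
            case 1 then show False using lt[of ?k1 ?k2 p1 p2] eq p1 p2 c1 c2 by simp
          next
            case 2 then show False using lt[of ?k2 ?k1 p2 p1] eq p1 p2 c1 c2 by simp
          qed
        qed
        then have "?q1 = ?q2" using eq spc(1)[of p1] spc(1)[of p2] p1 p2 c1 c2 by simp
        then show ?thesis using p1r p2r \<open>?k1 = ?k2\<close> by simp
      qed
    qed
  qed
  show ?case using bnd inj by simp
qed

lemma LV_eq: "LV n j = {real (ix n j) * W n ..< real (ix n j) * W n + W n}"
  by (simp add: cs_level_def LF_eq)

lemma grid_eq:
  fixes w :: real and a b :: nat
  assumes "0 < w" "x \<in> {real a * w ..< real a * w + w}" "x \<in> {real b * w ..< real b * w + w}"
  shows "a = b"
proof -
  have "real a * w < (real b + 1) * w" "real b * w < (real a + 1) * w"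
    using assms by (auto simp: algebra_simps)
  then have "real a < real b + 1" "real b < real a + 1"
    using assms(1) by (simp_all add: mult_less_cancel_right)
  then show ?thesis by linarith
qed

lemma LV_unique:
  assumes "j1 < H n" "j2 < H n" "x \<in> LV n j1" "x \<in> LV n j2"
  shows "j1 = j2"
proof -
  have "ix n j1 = ix n j2" using grid_eq[OF W_pos] assms(3,4) by (simp add: LV_eq)
  then show ?thesis using ix_inv[of n] assms(1,2) by (auto dest: inj_onD)
qed

lemma LV_disj:
  assumes "j1 < H n" "j2 < H n" "j1 \<noteq> j2"
  shows "LV n j1 \<inter> LV n j2 = {}"
  using LV_unique assms by blast

lemma LV_piece:
  assumes "i < rr n" "q < H n"
  shows "LV (Suc n) (Off n i + q) = {LF n q + real i * W (Suc n) ..< LF n q + real i * W (Suc n) + W (Suc n)}"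
  unfolding LV_eq ix_piece[OF assms] LF_eq using W_Suc[of n] by (simp add: algebra_simps)

lemma LV_as: "LV n q = {LF n q ..< LF n q + real (rr n) * W (Suc n)}"
  using W_Suc[of n] by (simp add: cs_level_def)

lemma LV_piece_sub:
  assumes "i < rr n" "q < H n"
  shows "LV (Suc n) (Off n i + q) \<subseteq> LV n q"
proof -
  have "real i * W (Suc n) + W (Suc n) \<le> real (rr n) * W (Suc n)"
  proof -
    have "real i + 1 \<le> real (rr n)" using assms(1) by linarith
    then have "(real i + 1) * W (Suc n) \<le> real (rr n) * W (Suc n)"
      using W_pos[of "Suc n"] by (intro mult_right_mono) auto
    then show ?thesis by (simp add: algebra_simps)
  qed
  then show ?thesis using LV_piece[OF assms] LV_as[of n q] W_pos[of "Suc n"] by auto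
qed

lemma LV_cover:
  assumes "x \<in> LV n q" "q < H n"
  shows "\<exists>i<rr n. x \<in> LV (Suc n) (Off n i + q)"
proof -
  let ?w = "W (Suc n)" and ?a = "LF n q"
  have w: "0 < ?w" by (rule W_pos)
  have x: "?a \<le> x" "x < ?a + real (rr n) * ?w" using assms(1) LV_as[of n q] by auto
  define t where "t = \<lfloor>(x - ?a) / ?w\<rfloor>"
  have t0: "0 \<le> t" using x w by (simp add: t_def)
  have t1: "real_of_int t \<le> (x - ?a) / ?w" "(x - ?a) / ?w < real_of_int t + 1" unfolding t_def by linarith+
  have "(x - ?a) / ?w < real (rr n)" using x w by (simp add: field_simps)
  then have tr: "t < int (rr n)" using t1 by linarith
  let ?i = "nat t"
  have i: "?i < rr n" using tr t0 by simp
  have ri: "real ?i = real_of_int t" using t0 by simp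
  have "real ?i * ?w \<le> x - ?a" "x - ?a < real ?i * ?w + ?w"
    using t1 w ri by (simp_all add: field_simps)
  then have "x \<in> LV (Suc n) (Off n ?i + q)" using LV_piece[OF i assms(2)] by simp
  then show ?thesis using i by blast
qed



lemma LF_piece:
  assumes "i < rr n" "q < H n"
  shows "LF (Suc n) (Off n i + q) = LF n q + real i * W (Suc n)"
  unfolding LF_eq ix_piece[OF assms] using W_Suc[of n] by (simp add: algebra_simps)

lemma nontop_prop:
  assumes "Suc j < H n" "x \<in> LV n j" "n \<le> N"
  shows "\<exists>j'. Suc j' < H N \<and> x \<in> LV N j' \<and> LF N (Suc j') - LF N j' = LF n (Suc j) - LF n j"
  using assms(3)
proof (induction N rule: dec_induct)
  case base then show ?case using assms by blast
next
  case (step m)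
  then obtain jm where jm: "Suc jm < H m" "x \<in> LV m jm" "LF m (Suc jm) - LF m jm = LF n (Suc j) - LF n j"
    by blast
  obtain i where i: "i < rr m" "x \<in> LV (Suc m) (Off m i + jm)" using LV_cover[of x m jm] jm by auto
  have lt: "Off m i + Suc jm < H (Suc m)" using piece_lt[OF i(1) jm(1)] .
  have "LF (Suc m) (Suc (Off m i + jm)) - LF (Suc m) (Off m i + jm) = LF m (Suc jm) - LF m jm"
    using LF_piece[OF i(1) jm(1)] LF_piece[OF i(1) Suc_lessD[OF jm(1)]] by simp
  then show ?case using lt i jm(3) by (intro exI[of _ "Off m i + jm"]) simp
qed

lemma TT_eq:
  assumes "Suc j < H n" "x \<in> LV n j"
  shows "TT x = x - LF n j + LF n (Suc j)"
proof -
  let ?P = "\<lambda>y. \<exists>n j. Suc j < H n \<and> x \<in> LV n j \<and> y = x - LF n j + LF n (Suc j)"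
  have ex: "\<exists>n j. Suc j < H n \<and> x \<in> LV n j" using assms by blast
  have all: "y = x - LF n j + LF n (Suc j)" if Py: "?P y" for y
  proof -
    obtain n' j' where nj: "Suc j' < H n'" "x \<in> LV n' j'" "y = x - LF n' j' + LF n' (Suc j')"
      using Py by blast
    let ?N = "max n n'"
    obtain j1 where j1: "Suc j1 < H ?N" "x \<in> LV ?N j1" "LF ?N (Suc j1) - LF ?N j1 = LF n (Suc j) - LF n j"
      using nontop_prop[OF assms, of ?N] by auto
    obtain j2 where j2: "Suc j2 < H ?N" "x \<in> LV ?N j2" "LF ?N (Suc j2) - LF ?N j2 = LF n' (Suc j') - LF n' j'"
      using nontop_prop[OF nj(1,2), of ?N] by auto
    have "j1 = j2" using LV_unique[of j1 ?N j2 x] j1 j2 by simp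
    then show ?thesis using j1(3) j2(3) nj(3) by simp
  qed
  have "TT x = (SOME y. ?P y)" unfolding cs_map_def using ex by simp
  also have "\<dots> = x - LF n j + LF n (Suc j)"
    using someI[of ?P "x - LF n j + LF n (Suc j)"] all assms by blast
  finally show ?thesis .
qed

lemma TT_pow:
  assumes "x \<in> LV n p" "p + m < H n"
  shows "(TT ^^ m) x = x - LF n p + LF n (p + m)"
  using assms(2)
proof (induction m)
  case 0 then show ?case by simp
next
  case (Suc m)
  then have IH: "(TT ^^ m) x = x - LF n p + LF n (p + m)" by simp
  have "(TT ^^ m) x \<in> LV n (p + m)" using IH assms(1) by (simp add: cs_level_def)
  then have "TT ((TT ^^ m) x) = (TT ^^ m) x - LF n (p + m) + LF n (Suc (p + m))"
    using Suc.prems by (intro TT_eq) simp_all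
  then show ?case using IH by simp
qed

lemma TT_image_sets:
  assumes S: "S \<in> sets lebesgue"
  shows "TT ` S \<in> sets lebesgue"
proof -
  let ?I = "{(n, j). Suc j < H n}"
  let ?NT = "\<Union>(n, j)\<in>?I. LV n j"
  let ?F = "\<lambda>(n, j). (\<lambda>x. (LF n (Suc j) - LF n j) + x) ` (S \<inter> LV n j)"
  have eq: "TT ` S = (\<Union>nj\<in>?I. ?F nj) \<union> (S - ?NT)"
  proof
    show "TT ` S \<subseteq> (\<Union>nj\<in>?I. ?F nj) \<union> (S - ?NT)"
    proof
      fix y assume "y \<in> TT ` S"
      then obtain x where x: "x \<in> S" "y = TT x" by auto
      show "y \<in> (\<Union>nj\<in>?I. ?F nj) \<union> (S - ?NT)"
      proof (cases "x \<in> ?NT")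
        case True
        then obtain n j where nj: "Suc j < H n" "x \<in> LV n j" by auto
        have "y = (LF n (Suc j) - LF n j) + x" using TT_eq[OF nj] x by simp
        then have "y \<in> ?F (n, j)" using x nj by auto
        then show ?thesis using nj by blast
      next
        case False
        then have "TT x = x" unfolding cs_map_def by auto
        then show ?thesis using x False by auto
      qed
    qed
  next
    show "(\<Union>nj\<in>?I. ?F nj) \<union> (S - ?NT) \<subseteq> TT ` S"
    proof
      fix y assume y: "y \<in> (\<Union>nj\<in>?I. ?F nj) \<union> (S - ?NT)"
      show "y \<in> TT ` S"
      proof (cases "y \<in> S - ?NT")
        case True
        then have "TT y = y" unfolding cs_map_def by auto
        then show ?thesis using True by (metis DiffD1 imageI)
      next
        case False
        then obtain n j where nj: "Suc j < H n" and "y \<in> ?F (n, j)" using y by auto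
        then obtain x where x: "x \<in> S" "x \<in> LV n j" "y = (LF n (Suc j) - LF n j) + x" by auto
        have "TT x = y" using TT_eq[OF nj x(2)] x(3) by simp
        then show ?thesis using x(1) by blast
      qed
    qed
  qed
  have lv: "LV n j \<in> sets lebesgue" for n j by (simp add: cs_level_def)
  have "(\<Union>nj\<in>?I. ?F nj) \<in> sets lebesgue"
    by (intro sets.countable_UN) (auto intro!: lebesgue_sets_translation S lv)
  moreover have "?NT \<in> sets lebesgue"
    by (intro sets.countable_UN) (auto intro!: lv)
  ultimately show ?thesis unfolding eq using S by auto
qed

lemma TT_pow_image_sets:
  assumes S: "S \<in> sets lebesgue"
  shows "(TT ^^ m) ` S \<in> sets lebesgue"
proof (induction m)
  case 0 then show ?case using S by simp
next
  case (Suc m)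
  have "(TT ^^ Suc m) ` S = TT ` ((TT ^^ m) ` S)" by (simp add: image_comp)
  then show ?case using TT_image_sets[OF Suc] by simp
qed



definition dI :: "real set \<Rightarrow> real \<Rightarrow> real \<Rightarrow> real" where
  "dI A a b = measure lebesgue ({a..<b} - A)"

lemma Ico_lmeas: "{a..<b::real} \<in> lmeasurable"
  by (cases "a \<le> b") (auto simp: fmeasurable_def)

lemma Ico_diff_lmeas: "A \<in> sets lebesgue \<Longrightarrow> {a..<b::real} - A \<in> lmeasurable"
  by (rule fmeasurable_Diff[OF Ico_lmeas])

lemma dI_nonneg: "0 \<le> dI A a b" by (simp add: dI_def)

lemma dI_add:
  assumes A: "A \<in> sets lebesgue" and "a \<le> b" "b \<le> c"
  shows "dI A a c = dI A a b + dI A b c"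
proof -
  have eq: "{a..<c} - A = ({a..<b} - A) \<union> ({b..<c} - A)" using assms by auto
  show ?thesis unfolding dI_def eq
    using Ico_diff_lmeas[OF A, of a b] Ico_diff_lmeas[OF A, of b c]
    by (intro measure_Union) (auto simp: fmeasurable_def)
qed

lemma dI_sum:
  assumes A: "A \<in> sets lebesgue" and w: "0 \<le> w"
  shows "dI A (a + real m * w) (a + real (m + t) * w)
       = (\<Sum>i\<in>{m..<m+t}. dI A (a + real i * w) (a + real (Suc i) * w))"
proof (induction t)
  case 0 then show ?case by (simp add: dI_def)
next
  case (Suc t)
  have "dI A (a + real m * w) (a + real (m + Suc t) * w)
     = dI A (a + real m * w) (a + real (m + t) * w) + dI A (a + real (m + t) * w) (a + real (Suc (m + t)) * w)"
    unfolding add_Suc_right using w by (intro dI_add[OF A]) (auto intro!: mult_right_mono)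
  then show ?case using Suc by simp
qed

lemma success_concl:
  assumes A: "A \<in> sets lebesgue" and kc: "k \<le> cc N" and q: "q < H N"
    and s: "dI A (LF N q) (LF N q + real (k + 1) * W (Suc N)) < W (Suc N)"
  shows "\<exists>n>0. emeasure lebesgue (\<Inter>i\<in>{0..k}. (TT ^^ (i * n)) ` A) > 0"
proof -
  let ?n = "H N" and ?w = "W (Suc N)" and ?a = "LF N q"
  have w: "0 < ?w" by (rule W_pos)
  have kr: "k < rr N" using kc cc_le[of N] by (simp add: rr_def)
  define D where "D = {?a..<?a + ?w}"
  define P where "P j = (\<lambda>x. x - real j * ?w) ` A" for j :: nat
  have Pm: "P j \<in> sets lebesgue" for j
    unfolding P_def using lebesgue_sets_translation[OF A, of "- (real j * ?w)"] by simp
  have Pmem: "x \<in> P j \<longleftrightarrow> x + real j * ?w \<in> A" for x j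
    unfolding P_def by (auto simp: image_iff) (metis add_diff_cancel)
  define B where "B = D \<inter> (\<Inter>j\<in>{0..k}. P j)"
  have Dm: "D \<in> lmeasurable" unfolding D_def by (rule Ico_lmeas)
  have Bm: "B \<in> sets lebesgue" unfolding B_def using Dm Pm by auto
  have DB: "D - B = (\<Union>j\<in>{0..k}. D - P j)" unfolding B_def by auto
  have "measure lebesgue (D - P j) = dI A (?a + real j * ?w) (?a + real (Suc j) * ?w)" for j
  proof -
    have "D - P j = (\<lambda>x. x - real j * ?w) ` ({?a + real j * ?w ..< ?a + real (Suc j) * ?w} - A)"
    proof (rule set_eqI)
      fix x
      show "x \<in> D - P j \<longleftrightarrow> x \<in> (\<lambda>x. x - real j * ?w) ` ({?a + real j * ?w ..< ?a + real (Suc j) * ?w} - A)"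
        unfolding D_def by (auto simp: Pmem image_iff algebra_simps)
    qed
    then show ?thesis unfolding dI_def by (simp add: measure_translation_subtract)
  qed
  then have "measure lebesgue (D - B) \<le> (\<Sum>j\<in>{0..k}. dI A (?a + real j * ?w) (?a + real (Suc j) * ?w))"
    unfolding DB using Dm Pm by (intro order.trans[OF measure_UNION_le]) auto
  also have "\<dots> = dI A (?a + real 0 * ?w) (?a + real (0 + (k+1)) * ?w)"
    using dI_sum[OF A less_imp_le[OF w], of ?a 0 "k+1"] by (simp add: atLeastLessThanSuc_atLeastAtMost)
  also have "\<dots> < ?w" using s by simp
  finally have DBlt: "measure lebesgue (D - B) < ?w" .
  have "measure lebesgue (D - (D - B)) = measure lebesgue D - measure lebesgue (D - B)"
    using Dm Bm by (intro measure_Diff) (auto simp: fmeasurable_def)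
  moreover have "D - (D - B) = B" unfolding B_def by auto
  moreover have "measure lebesgue D = ?w" unfolding D_def using w by simp
  ultimately have Bpos: "0 < measure lebesgue B" using DBlt by simp
  define C where "C = (\<lambda>x. real k * ?w + x) ` B"
  have Cm: "C \<in> sets lebesgue" unfolding C_def by (rule lebesgue_sets_translation[OF Bm])
  have Cpos: "0 < measure lebesgue C" unfolding C_def using measure_translation[of "real k * ?w" B] Bpos
    by (simp add: image_def)
  have sub: "C \<subseteq> (\<Inter>i\<in>{0..k}. (TT ^^ (i * ?n)) ` A)"
  proof
    fix y assume "y \<in> C"
    then obtain x where x: "x \<in> B" "y = real k * ?w + x" unfolding C_def by auto
    show "y \<in> (\<Inter>i\<in>{0..k}. (TT ^^ (i * ?n)) ` A)"
    proof
      fix i assume i: "i \<in> {0..k}"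
      let ?z = "x + real (k - i) * ?w"
      have "x \<in> P (k - i)" using x(1) i unfolding B_def by auto
      then have zA: "?z \<in> A" unfolding Pmem .
      have kir: "k - i < rr N" using kr by simp
      have zL: "?z \<in> LV (Suc N) (Off N (k - i) + q)"
        using x(1) unfolding B_def D_def LV_piece[OF kir q] by auto
      have idx: "Off N (k - i) + q + i * ?n = Off N k + q"
      proof -
        have ik: "i \<le> k" using i by simp
        have "(k - i) * ?n + i * ?n = k * ?n" using ik by (simp add: add_mult_distrib[symmetric])
        moreover have "Off N (k - i) = (k - i) * ?n" "Off N k = k * ?n" using Off_small kc by auto
        ultimately show ?thesis by simp
      qed
      have lt: "Off N (k - i) + q + i * ?n < H (Suc N)" using idx piece_lt[OF kr q] by simp
      have "(TT ^^ (i * ?n)) ?z = ?z - LF (Suc N) (Off N (k - i) + q) + LF (Suc N) (Off N (k - i) + q + i * ?n)"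
        by (rule TT_pow[OF zL lt])
      also have "\<dots> = y"
      proof -
        have ik: "i \<le> k" using i by simp
        have "real (k - i) = real k - real i" using ik by (rule of_nat_diff)
        then show ?thesis unfolding idx LF_piece[OF kir q] LF_piece[OF kr q] x(2)
          by (simp add: algebra_simps)
      qed
      finally show "y \<in> (TT ^^ (i * ?n)) ` A" using zA by (metis imageI)
    qed
  qed
  have Im: "(\<Inter>i\<in>{0..k}. (TT ^^ (i * ?n)) ` A) \<in> sets lebesgue"
    by (intro sets.finite_INT) (auto intro: TT_pow_image_sets[OF A])
  have "emeasure lebesgue C \<le> emeasure lebesgue (\<Inter>i\<in>{0..k}. (TT ^^ (i * ?n)) ` A)"
    by (rule emeasure_mono[OF sub Im])
  moreover have "emeasure lebesgue C \<noteq> 0" using Cpos by (auto simp: measure_def)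
  ultimately have "0 < emeasure lebesgue (\<Inter>i\<in>{0..k}. (TT ^^ (i * ?n)) ` A)"
    by (metis not_gr_zero order_less_le_trans)
  then show ?thesis using H_pos[of N] by blast
qed



lemma descent:
  assumes A: "A \<in> sets lebesgue" and kc: "k \<le> cc n" and q: "q < H n"
    and d: "dI A (LF n q) (LF n q + W n) \<le> \<eta> * W n"
    and e: "\<eta> * real (k + 1) \<le> 1 / 2"
    and ns: "\<not> dI A (LF n q) (LF n q + real (k + 1) * W (Suc n)) < W (Suc n)"
  shows "\<exists>q'<H (Suc n). dI A (LF (Suc n) q') (LF (Suc n) q' + W (Suc n))
            \<le> (\<eta> - 1 / (2 * real (rr n))) * W (Suc n)"
proof (rule ccontr)
  assume con: "\<not> ?thesis"
  let ?a = "LF n q" and ?w = "W (Suc n)" and ?r = "rr n"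
  define u where "u = 1 / (2 * real ?r)"
  define c where "c = \<eta> - u"
  have w: "0 < ?w" by (rule W_pos)
  have kr: "k + 1 < ?r" using kc cc_le[of n] by (simp add: rr_def)
  have Wn: "W n = real ?r * ?w" by (rule W_Suc)
  have split: "dI A ?a (?a + W n) = dI A ?a (?a + real (k+1) * ?w) + dI A (?a + real (k+1) * ?w) (?a + real ?r * ?w)"
    unfolding Wn using w kr by (intro dI_add[OF A]) (auto intro!: mult_right_mono)
  have sum: "dI A (?a + real (k+1) * ?w) (?a + real ?r * ?w) = (\<Sum>i\<in>{k+1..<?r}. dI A (?a + real i * ?w) (?a + real (Suc i) * ?w))"
    using dI_sum[OF A less_imp_le[OF w], of ?a "k+1" "?r - (k+1)"] kr by simp
  have pieces: "c * ?w < dI A (?a + real i * ?w) (?a + real (Suc i) * ?w)" if i: "i \<in> {k+1..<?r}" for i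
  proof -
    have ir: "i < ?r" using i by simp
    have "\<not> dI A (LF (Suc n) (Off n i + q)) (LF (Suc n) (Off n i + q) + ?w) \<le> c * ?w"
      using con piece_lt[OF ir q] unfolding c_def u_def by blast
    then show ?thesis unfolding LF_piece[OF ir q] by (simp add: algebra_simps)
  qed
  have lt1: "(\<Sum>i\<in>{k+1..<?r}. c * ?w) < (\<Sum>i\<in>{k+1..<?r}. dI A (?a + real i * ?w) (?a + real (Suc i) * ?w))"
    using kr pieces by (intro sum_strict_mono) auto
  have eq1: "(\<Sum>i\<in>{k+1..<?r}. c * ?w) = (real ?r - real (k+1)) * c * ?w"
  proof -
    have "(\<Sum>i\<in>{k+1..<?r}. c * ?w) = real (?r - (k+1)) * (c * ?w)" by simp
    moreover have "real (?r - (k+1)) = real ?r - real (k+1)" using kr by (intro of_nat_diff) simp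
    ultimately show ?thesis by simp
  qed
  have gt: "(real ?r - real (k+1)) * c * ?w < dI A (?a + real (k+1) * ?w) (?a + real ?r * ?w)"
    unfolding sum eq1[symmetric] by (rule lt1)
  have E: "?w \<le> dI A ?a (?a + real (k + 1) * ?w)" using ns by simp
  have tot: "?w + (real ?r - real (k+1)) * c * ?w < \<eta> * (real ?r * ?w)"
    using split gt E d Wn by simp
  have uR: "u * real ?r = 1/2" unfolding u_def using rr_pos[of n] by simp
  have u0: "0 \<le> u" unfolding u_def by simp
  have "(real ?r - real (k+1)) * u \<le> 1/2"
  proof -
    have "(real ?r - real (k+1)) * u = u * real ?r - real (k+1) * u" by (simp add: algebra_simps)
    also have "\<dots> \<le> 1/2" using uR u0 by simp
    finally show ?thesis .
  qed
  then have key: "0 \<le> 1 - real (k+1) * \<eta> - (real ?r - real (k+1)) * u"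
    using e by (simp add: algebra_simps)
  have "?w * (1 - real (k+1) * \<eta> - (real ?r - real (k+1)) * u) = ?w + (real ?r - real (k+1)) * c * ?w - \<eta> * (real ?r * ?w)"
    unfolding c_def by (simp add: algebra_simps)
  moreover have "0 \<le> ?w * (1 - real (k+1) * \<eta> - (real ?r - real (k+1)) * u)"
    using w key by simp
  ultimately show False using tot by linarith
qed

lemma iterate:
  assumes A: "A \<in> sets lebesgue"
    and ns: "\<And>n q. k \<le> cc n \<Longrightarrow> q < H n \<Longrightarrow> \<not> dI A (LF n q) (LF n q + real (k + 1) * W (Suc n)) < W (Suc n)"
    and kn: "k * k \<le> n" and q: "q < H n"
    and d: "dI A (LF n q) (LF n q + W n) \<le> \<eta> * W n"
    and e: "\<eta> * real (k + 1) \<le> 1 / 2"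
  shows "\<exists>q'<H (n + t). dI A (LF (n + t) q') (LF (n + t) q' + W (n + t))
           \<le> (\<eta> - real t / (2 * real (n + t + 2))) * W (n + t)"
proof (induction t)
  case 0 then show ?case using q d by auto
next
  case (Suc t)
  then obtain q1 where q1: "q1 < H (n + t)"
    "dI A (LF (n + t) q1) (LF (n + t) q1 + W (n + t)) \<le> (\<eta> - real t / (2 * real (n + t + 2))) * W (n + t)"
    by blast
  let ?e = "\<eta> - real t / (2 * real (n + t + 2))"
  have kc: "k \<le> cc (n + t)" using kn by (intro cc_ge) simp
  have "real t / (2 * real (n + t + 2)) * real (k+1) \<ge> 0" by simp
  moreover have "?e * real (k+1) = \<eta> * real (k+1) - real t / (2 * real (n + t + 2)) * real (k+1)"
    by (simp add: algebra_simps)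
  ultimately have e1: "?e * real (k + 1) \<le> 1 / 2" using e by linarith
  show ?case
  proof (cases "dI A (LF (n + t) q1) (LF (n + t) q1 + real (k + 1) * W (Suc (n + t))) < W (Suc (n + t))")
    case True then show ?thesis using ns[OF kc q1(1)] by simp
  next
    case False
    obtain q' where q': "q' < H (Suc (n + t))"
      "dI A (LF (Suc (n + t)) q') (LF (Suc (n + t)) q' + W (Suc (n + t)))
         \<le> (?e - 1 / (2 * real (rr (n + t)))) * W (Suc (n + t))"
      using descent[OF A kc q1(1) q1(2) e1 False] by blast
    have "?e - 1 / (2 * real (rr (n + t))) = \<eta> - real (Suc t) / (2 * real (n + t + 2))"
      by (simp add: rr_def add_divide_distrib[symmetric] algebra_simps)
    also have "\<dots> \<le> \<eta> - real (Suc t) / (2 * real (n + Suc t + 2))"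
      by (intro diff_left_mono divide_left_mono) auto
    finally have "(?e - 1 / (2 * real (rr (n + t)))) * W (Suc (n + t)) \<le> (\<eta> - real (Suc t) / (2 * real (n + Suc t + 2))) * W (Suc (n + t))"
      using W_pos by (intro mult_right_mono) (auto simp: less_imp_le)
    then show ?thesis using q' by (intro exI[of _ q']) simp
  qed
qed

lemma no_good:
  assumes A: "A \<in> sets lebesgue"
    and ns: "\<And>n q. k \<le> cc n \<Longrightarrow> q < H n \<Longrightarrow> \<not> dI A (LF n q) (LF n q + real (k + 1) * W (Suc n)) < W (Suc n)"
    and kn: "k * k \<le> n" and n1: "1 \<le> n" and q: "q < H n"
    and e: "\<eta> * real (k + 1) \<le> 1 / 2" and e8: "\<eta> < 1 / 8"
  shows "\<not> dI A (LF n q) (LF n q + W n) \<le> \<eta> * W n"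
proof
  assume d: "dI A (LF n q) (LF n q + W n) \<le> \<eta> * W n"
  obtain q' where "q' < H (n + n)" and q': "dI A (LF (n + n) q') (LF (n + n) q' + W (n + n))
           \<le> (\<eta> - real n / (2 * real (n + n + 2))) * W (n + n)"
    using iterate[OF A ns kn q d e, of n] by blast
  have "1 / 8 \<le> real n / (2 * real (n + n + 2))" using n1 by (simp add: field_simps)
  then have "\<eta> - real n / (2 * real (n + n + 2)) < 0" using e8 by linarith
  then have "(\<eta> - real n / (2 * real (n + n + 2))) * W (n + n) < 0" using W_pos by (simp add: mult_neg_pos)
  then show False using q' dI_nonneg[of A] by (meson le_less_trans not_less)
qed



lemma prod_ge: "real (Suc N) \<le> (\<Prod>i<N. real (rr i))"
proof (induction N)
  case 0 then show ?case by simp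
next
  case (Suc N)
  have "real (Suc (Suc N)) \<le> real (Suc N) * real (rr N)" by (simp add: rr_def algebra_simps)
  also have "\<dots> \<le> (\<Prod>i<N. real (rr i)) * real (rr N)" using Suc by (intro mult_right_mono) auto
  finally show ?case by simp
qed

lemma W_le: "W N \<le> 1 / real (Suc N)"
  unfolding cs_width_def using prod_ge[of N]
  by (simp add: divide_simps)

lemma LV_later:
  assumes "x \<in> LV n j" "j < H n" "n \<le> N"
  shows "\<exists>j'<H N. x \<in> LV N j'"
  using assms(3)
proof (induction N rule: dec_induct)
  case base then show ?case using assms by blast
next
  case (step m)
  then obtain jm where jm: "jm < H m" "x \<in> LV m jm" by blast
  obtain i where i: "i < rr m" "x \<in> LV (Suc m) (Off m i + jm)" using LV_cover[OF jm(2,1)] by blast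
  then show ?case using piece_lt[OF i(1) jm(1)] by blast
qed

lemma LV_meas: "LV n j \<in> lmeasurable" unfolding cs_level_def by (rule Ico_lmeas)

lemma measure_LV: "measure lebesgue (LV n j) = W n"
  unfolding cs_level_def using W_pos[of n] by simp

lemma approx:
  assumes A: "A \<in> sets lebesgue" and Asub: "A \<subseteq> cs_space rr spacer"
    and Apos: "emeasure lebesgue A > 0" and eta: "0 < \<eta>"
  shows "\<exists>n\<ge>M. \<exists>q<H n. dI A (LF n q) (LF n q + W n) \<le> \<eta> * W n"
proof -
  have "\<exists>n j. j < H n \<and> emeasure lebesgue (A \<inter> LV n j) \<noteq> 0"
  proof (rule ccontr)
    assume "\<not> ?thesis"
    then have z: "A \<inter> LV n j \<in> null_sets lebesgue" if "j < H n" for n j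
      using that LV_meas[of n j] A by (intro null_setsI) (auto simp: fmeasurable_def)
    have "(\<Union>(n, j)\<in>{(n, j). j < H n}. A \<inter> LV n j) \<in> null_sets lebesgue"
      by (rule null_sets_UN') (auto intro: z)
    moreover have "(\<Union>(n, j)\<in>{(n, j). j < H n}. A \<inter> LV n j) = A"
      using Asub unfolding cs_space_def by auto
    ultimately have "emeasure lebesgue A = 0" by auto
    then show False using Apos by simp
  qed
  then obtain n1 j1 where j1: "j1 < H n1" and ne: "emeasure lebesgue (A \<inter> LV n1 j1) \<noteq> 0" by blast
  define A0 where "A0 = A \<inter> LV n1 j1"
  have A0m: "A0 \<in> lmeasurable" unfolding A0_def using LV_meas[of n1 j1] A
    by (metis fmeasurable_Int_fmeasurable inf_commute)
  define \<alpha> where "\<alpha> = measure lebesgue A0"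
  have "emeasure lebesgue A0 = ennreal \<alpha>" unfolding \<alpha>_def by (rule emeasure_eq_measure2[OF A0m])
  then have apos: "0 < \<alpha>" using ne unfolding A0_def \<alpha>_def
    by (metis ennreal_eq_0_iff measure_nonneg order_less_le)
  define \<epsilon> where "\<epsilon> = \<eta> * \<alpha> / 2"
  have epos: "0 < \<epsilon>" unfolding \<epsilon>_def using eta apos by simp
  obtain U where U: "open U" "A0 \<subseteq> U" "U - A0 \<in> lmeasurable" "emeasure lebesgue (U - A0) < ennreal \<epsilon>"
    using sets_lebesgue_outer_open[of A0 \<epsilon>] A0m epos by (auto simp: fmeasurable_def)
  have UA: "measure lebesgue (U - A0) < \<epsilon>"
    using U(4) emeasure_eq_measure2[OF U(3)] epos by (simp add: ennreal_less_iff)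
  define SS where "SS N = {j. j < H N \<and> LV N j \<subseteq> U}" for N
  define G where "G N = (\<Union>j\<in>SS N. LV N j)" for N
  have finSS: "finite (SS N)" for N unfolding SS_def by auto
  have Gm: "G N \<in> sets lebesgue" for N unfolding G_def using finSS LV_meas by (auto intro!: sets.finite_UN simp: fmeasurable_def)
  have GU: "G N \<subseteq> U" for N unfolding G_def SS_def by auto
  have Ginc: "incseq G"
  proof (rule incseq_SucI)
    fix N show "G N \<subseteq> G (Suc N)"
    proof
      fix x assume "x \<in> G N"
      then obtain j where j: "j < H N" "LV N j \<subseteq> U" "x \<in> LV N j" unfolding G_def SS_def by auto
      obtain i where i: "i < rr N" "x \<in> LV (Suc N) (Off N i + j)" using LV_cover[OF j(3,1)] by blast
      have "Off N i + j \<in> SS (Suc N)" unfolding SS_def using piece_lt[OF i(1) j(1)] LV_piece_sub[OF i(1) j(1)] j(2) by auto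
      then show "x \<in> G (Suc N)" unfolding G_def using i(2) by blast
    qed
  qed
  have cover: "\<exists>N. x \<in> G N" if x: "x \<in> A0" for x
  proof -
    have xU: "x \<in> U" using x U(2) by blast
    obtain e where e: "0 < e" "ball x e \<subseteq> U" using U(1) xU open_contains_ball by blast
    obtain N where N: "inverse (real (Suc N)) < e" using reals_Archimedean[OF e(1)] by blast
    let ?N = "max N n1"
    have "x \<in> LV n1 j1" using x unfolding A0_def by simp
    then obtain j where j: "j < H ?N" "x \<in> LV ?N j" using LV_later[OF _ j1, of x ?N] by auto
    have "W ?N \<le> 1 / real (Suc ?N)" by (rule W_le)
    also have "\<dots> \<le> 1 / real (Suc N)" by (intro divide_left_mono) auto
    finally have We: "W ?N < e" using N by (simp add: inverse_eq_divide)
    have "LV ?N j \<subseteq> ball x e"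
    proof
      fix y assume "y \<in> LV ?N j"
      then have "dist x y < e" using j(2) We unfolding cs_level_def dist_real_def by auto
      then show "y \<in> ball x e" by simp
    qed
    then have "j \<in> SS ?N" unfolding SS_def using j(1) e(2) by auto
    then show ?thesis unfolding G_def using j(2) by blast
  qed
  have inc2: "incseq (\<lambda>N. A0 \<inter> G N)" using Ginc unfolding incseq_def by auto
  have un: "(\<Union>N. A0 \<inter> G N) = A0" using cover by auto
  have rng: "range (\<lambda>N. A0 \<inter> G N) \<subseteq> sets lebesgue" using A0m Gm by (auto simp: fmeasurable_def)
  have "(SUP N. emeasure lebesgue (A0 \<inter> G N)) = emeasure lebesgue A0"
    using SUP_emeasure_incseq[OF rng inc2] un by simp
  also have "\<dots> = ennreal \<alpha>" by fact
  finally have "ennreal (\<alpha> / 2) < (SUP N. emeasure lebesgue (A0 \<inter> G N))" using apos by (simp add: ennreal_lessI)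
  then obtain N0 where N0: "ennreal (\<alpha> / 2) < emeasure lebesgue (A0 \<inter> G N0)" by (auto simp: less_SUP_iff)
  let ?N = "max N0 M"
  have "emeasure lebesgue (A0 \<inter> G N0) \<le> emeasure lebesgue (A0 \<inter> G ?N)"
    using inc2 rng unfolding incseq_def by (intro emeasure_mono) auto
  then have "ennreal (\<alpha> / 2) < emeasure lebesgue (A0 \<inter> G ?N)" using N0 by simp
  moreover have A0G: "A0 \<inter> G ?N \<in> lmeasurable" using A0m Gm by (intro fmeasurable_Int_fmeasurable)
  ultimately have big: "\<alpha> / 2 < measure lebesgue (A0 \<inter> G ?N)"
    using emeasure_eq_measure2[OF A0G] ennreal_less_iff[of "\<alpha> / 2"] apos by simp
  show ?thesis
  proof (rule ccontr)
    assume "\<not> ?thesis"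
    then have nt: "\<forall>n\<ge>M. \<forall>q<H n. \<not> dI A (LF n q) (LF n q + W n) \<le> \<eta> * W n" by blast
    have nge: "M \<le> ?N" by simp
    have bad: "\<eta> * W ?N \<le> measure lebesgue (LV ?N j - A)" if jN: "j < H ?N" for j
      using nt[rule_format, OF nge jN] unfolding dI_def cs_level_def by simp
    have disj: "disjoint_family_on (LV ?N) (SS ?N)" unfolding disjoint_family_on_def SS_def
    proof (intro ballI impI)
      fix i j assume "i \<in> {j. j < H ?N \<and> LV ?N j \<subseteq> U}" "j \<in> {j. j < H ?N \<and> LV ?N j \<subseteq> U}" "i \<noteq> j"
      then show "LV ?N i \<inter> LV ?N j = {}" using LV_disj[of i ?N j] by simp
    qed
    have disj2: "disjoint_family_on (\<lambda>j. LV ?N j - A) (SS ?N)" unfolding disjoint_family_on_def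
    proof (intro ballI impI)
      fix i j assume "i \<in> SS ?N" "j \<in> SS ?N" "i \<noteq> j"
      then have "LV ?N i \<inter> LV ?N j = {}" using disj unfolding disjoint_family_on_def by blast
      then show "(LV ?N i - A) \<inter> (LV ?N j - A) = {}" by blast
    qed
    have LVs: "LV ?N ` SS ?N \<subseteq> sets lebesgue" using LV_meas by (auto intro: fmeasurableD)
    have LVf: "emeasure lebesgue (LV ?N i) \<noteq> \<infinity>" if "i \<in> SS ?N" for i
      using fmeasurableD2[OF LV_meas] by simp
    have LVs2: "(\<lambda>j. LV ?N j - A) ` SS ?N \<subseteq> sets lebesgue" using LV_meas A by (auto intro: fmeasurableD)
    have LVf2: "emeasure lebesgue (LV ?N i - A) \<noteq> \<infinity>" if "i \<in> SS ?N" for i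
      using fmeasurableD2[OF fmeasurable_Diff[OF LV_meas A]] by simp
    have "measure lebesgue (G ?N) = (\<Sum>j\<in>SS ?N. measure lebesgue (LV ?N j))"
      unfolding G_def by (rule measure_finite_Union[OF finSS LVs disj LVf])
    then have mG: "measure lebesgue (G ?N) = (\<Sum>j\<in>SS ?N. W ?N)" by (simp add: measure_LV)
    have "G ?N - A = (\<Union>j\<in>SS ?N. LV ?N j - A)" unfolding G_def by auto
    then have mGA: "measure lebesgue (G ?N - A) = (\<Sum>j\<in>SS ?N. measure lebesgue (LV ?N j - A))"
      using measure_finite_Union[OF finSS LVs2 disj2 LVf2] by simp
    have "\<eta> * measure lebesgue (G ?N) = (\<Sum>j\<in>SS ?N. \<eta> * W ?N)" unfolding mG by (simp add: sum_distrib_left)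
    also have "\<dots> \<le> measure lebesgue (G ?N - A)" unfolding mGA
      using bad unfolding SS_def by (intro sum_mono) auto
    also have "\<dots> \<le> measure lebesgue (U - A0)"
      using GU U(3) Gm A A0_def by (intro measure_mono_fmeasurable) auto
    finally have 1: "\<eta> * measure lebesgue (G ?N) < \<epsilon>" using UA by simp
    have "measure lebesgue (A0 \<inter> G ?N) \<le> measure lebesgue (G ?N)"
    proof -
      have Gf: "G ?N \<in> lmeasurable" unfolding G_def using finSS LV_meas by (intro fmeasurable.finite_UN) auto
      show ?thesis using A0G Gf by (intro measure_mono_fmeasurable) auto
    qed
    then have "\<eta> * (\<alpha> / 2) < \<eta> * measure lebesgue (G ?N)" using big eta by (intro mult_strict_left_mono) auto
    then show False using 1 unfolding \<epsilon>_def by simp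
  qed
qed



theorem mainTheorem15:
  fixes A :: "real set" and k :: nat
  assumes "A \<in> sets lebesgue"
    and "A \<subseteq> cs_space rr spacer"
    and "emeasure lebesgue A > 0"
  shows "\<exists>n>0. emeasure lebesgue
           (\<Inter>i\<in>{0..k}. (cs_map rr spacer ^^ (i * n)) ` A) > 0"
proof (cases "\<exists>N q. k \<le> cc N \<and> q < H N \<and> dI A (LF N q) (LF N q + real (k + 1) * W (Suc N)) < W (Suc N)")
  case True
  then obtain N q where "k \<le> cc N" "q < H N" "dI A (LF N q) (LF N q + real (k + 1) * W (Suc N)) < W (Suc N)"
    by blast
  then show ?thesis using success_concl[OF assms(1)] by blast
next
  case False
  then have ns: "\<And>n q. k \<le> cc n \<Longrightarrow> q < H n \<Longrightarrow> \<not> dI A (LF n q) (LF n q + real (k + 1) * W (Suc n)) < W (Suc n)"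
    by blast
  define \<eta> :: real where "\<eta> = 1 / (16 * real (k + 1))"
  have eta: "0 < \<eta>" unfolding \<eta>_def by simp
  have e1: "\<eta> * real (k + 1) \<le> 1 / 2" unfolding \<eta>_def by simp
  have e8: "\<eta> < 1 / 8" unfolding \<eta>_def by (simp add: field_simps)
  obtain n q where n: "k * k + 1 \<le> n" and q: "q < H n" and d: "dI A (LF n q) (LF n q + W n) \<le> \<eta> * W n"
    using approx[OF assms eta, of "k * k + 1"] by blast
  have "\<not> dI A (LF n q) (LF n q + W n) \<le> \<eta> * W n"
    using no_good[OF assms(1) ns _ _ q e1 e8] n by simp
  then show ?thesis using d by blast
qed


end
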